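(* Let $\mathcal{C}$ be a component of class $i$ (at an upper layer $l$) which has at least $m$ pairwise internally vertex-disjoint long connector paths, where $m=\Omega(k)$. Then every maximal matching in $\mathcal{H}_i[\mathcal{C}]$ has cardinality $\Omega(k)$ (namely at least $m/2$).
   Context: $G=(V,E)$ is a finite undirected graph with vertex connectivity $k$. Fix an integer $L$. The virtual graph $\mathcal{G}$ contains $3L$ copies of each $v\in V$: each lower layer $1,\dots,L$ contains one copy of every node; each upper layer $L+1,\dots,2L$ contains a type-1 copy and a type-2 copy of every node. Every copy of $v$ is adjacent to all other copies of $v$ and to all copies of each neighbor of $v$ in $G$. $\Psi$ maps virtual nodes to real nodes. There are classes $1,\dots,t$. For a fixed upper layer $l$, nodes of layers $1,\dots,l-1$ are old nodes, each assigned a class; a component of class $i$ is a connected component of the subgraph induced by old nodes of class $i$. A long connector path for $\mathcal{C}$ is a path $(s,v,w,u)$ with $s\in\mathcal{C}$, $u$ in a component $\mathcal{C}'\neq\mathcal{C}$ of class $i$ with $\Psi(\mathcal{C})\cap\Psi(\mathcal{C}')=\emptyset$, $v$ a type-2 and $w$ a type-1 node of layer $l$, $v$ having no neighbor in any component of class $i$ other than $\mathcal{C}$ and $w$ having no neighbor in $\mathcal{C}$; its internal vertices are $v,w$, and paths are internally vertex-disjoint if their sets of internal vertices are pairwise disjoint. The helper graph $\mathcal{H}_i[\mathcal{C}]$: for each type-2 node $v$ of layer $l$, a node $v_{\mathcal{C}}$ is added iff $\Psi(v)\notin\Psi(\mathcal{C})$, $v$ has a neighbor in $\mathcal{C}$,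 and $v$ has no neighbor in another component of class $i$; for each such $v_{\mathcal{C}}$ and each type-1 neighbor $w$ of $v$ on layer $l$ that has a neighbor in some component $\mathcal{C}'\neq\mathcal{C}$ of class $i$ but no neighbor in $\mathcal{C}$, a node $w_{\mathcal{C}}$ and the edge $\{v_{\mathcal{C}},w_{\mathcal{C}}\}$ are added. *)

theory Defs
  imports Main
begin

(* Virtual nodes: Low j v  = copy of v on lower layer j (1..L);
   Up1 j v / Up2 j v = type-1 / type-2 copy of v on upper layer j (L+1..2L). *)
datatype 'a vnode = Low nat 'a | Up1 nat 'a | Up2 nat 'a

fun Psi :: "'a vnode \<Rightarrow> 'a" where
  "Psi (Low j a) = a" | "Psi (Up1 j a) = a" | "Psi (Up2 j a) = a"

fun layer :: "'a vnode \<Rightarrow> nat" where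
  "layer (Low j a) = j" | "layer (Up1 j a) = j" | "layer (Up2 j a) = j"

definition vnodes :: "'a set \<Rightarrow> nat \<Rightarrow> 'a vnode set" where
  "vnodes V L =
     {Low j a | j a. 1 \<le> j \<and> j \<le> L \<and> a \<in> V}
   \<union> {Up1 j a | j a. L < j \<and> j \<le> 2 * L \<and> a \<in> V}
   \<union> {Up2 j a | j a. L < j \<and> j \<le> 2 * L \<and> a \<in> V}"

definition vadj :: "'a set \<Rightarrow> ('a \<Rightarrow> 'a \<Rightarrow> bool) \<Rightarrow> nat \<Rightarrow> 'a vnode \<Rightarrow> 'a vnode \<Rightarrow> bool" where
  "vadj V E L x y \<longleftrightarrow> x \<in> vnodes V L \<and> y \<in> vnodes V L \<and> x \<noteq> y \<and>
     (Psi x = Psi y \<or> E (Psi x) (Psi y))"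

definition old_class :: "'a set \<Rightarrow> nat \<Rightarrow> nat \<Rightarrow> ('a vnode \<Rightarrow> nat) \<Rightarrow> nat \<Rightarrow> 'a vnode set" where
  "old_class V L l cls i = {x \<in> vnodes V L. layer x < l \<and> cls x = i}"

definition class_component ::
  "'a set \<Rightarrow> ('a \<Rightarrow> 'a \<Rightarrow> bool) \<Rightarrow> nat \<Rightarrow> nat \<Rightarrow> ('a vnode \<Rightarrow> nat) \<Rightarrow> nat \<Rightarrow> 'a vnode set \<Rightarrow> bool" where
  "class_component V E L l cls i C \<longleftrightarrow>
     (\<exists>x \<in> old_class V L l cls i.
        C = {y. (\<lambda>a b. vadj V E L a b \<and> a \<in> old_class V L l cls i \<and> b \<in> old_class V L l cls i)\<^sup>*\<^sup>* x y})"

definition has_nbr_in :: "'a set \<Rightarrow> ('a \<Rightarrow> 'a \<Rightarrow> bool) \<Rightarrow> nat \<Rightarrow> 'a vnode \<Rightarrow> 'a vnode set \<Rightarrow> bool" where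
  "has_nbr_in V E L x C \<longleftrightarrow> (\<exists>y \<in> C. vadj V E L x y)"

definition is_type1 :: "nat \<Rightarrow> 'a vnode \<Rightarrow> bool" where
  "is_type1 l x \<longleftrightarrow> (\<exists>a. x = Up1 l a)"

definition is_type2 :: "nat \<Rightarrow> 'a vnode \<Rightarrow> bool" where
  "is_type2 l x \<longleftrightarrow> (\<exists>a. x = Up2 l a)"

definition long_connector ::
  "'a set \<Rightarrow> ('a \<Rightarrow> 'a \<Rightarrow> bool) \<Rightarrow> nat \<Rightarrow> nat \<Rightarrow> ('a vnode \<Rightarrow> nat) \<Rightarrow> nat \<Rightarrow> 'a vnode set
   \<Rightarrow> 'a vnode \<Rightarrow> 'a vnode \<Rightarrow> 'a vnode \<Rightarrow> 'a vnode \<Rightarrow> bool" where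
  "long_connector V E L l cls i C s v w u \<longleftrightarrow>
     s \<in> C \<and>
     (\<exists>C'. class_component V E L l cls i C' \<and> C' \<noteq> C \<and> u \<in> C' \<and> Psi ` C \<inter> Psi ` C' = {}) \<and>
     v \<in> vnodes V L \<and> is_type2 l v \<and> w \<in> vnodes V L \<and> is_type1 l w \<and>
     vadj V E L s v \<and> vadj V E L v w \<and> vadj V E L w u \<and>
     (\<forall>C'. class_component V E L l cls i C' \<and> C' \<noteq> C \<longrightarrow> \<not> has_nbr_in V E L v C') \<and>
     \<not> has_nbr_in V E L w C"

(* edges of the helper graph H_i[C]; an edge {v_C, w_C} is represented by the pair (v, w) *)
definition helper_edges ::
  "'a set \<Rightarrow> ('a \<Rightarrow> 'a \<Rightarrow> bool) \<Rightarrow> nat \<Rightarrow> nat \<Rightarrow> ('a vnode \<Rightarrow> nat) \<Rightarrow> nat \<Rightarrow> 'a vnode set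
   \<Rightarrow> ('a vnode \<times> 'a vnode) set" where
  "helper_edges V E L l cls i C =
     {(v, w). v \<in> vnodes V L \<and> is_type2 l v \<and> Psi v \<notin> Psi ` C \<and> has_nbr_in V E L v C \<and>
        (\<forall>C'. class_component V E L l cls i C' \<and> C' \<noteq> C \<longrightarrow> \<not> has_nbr_in V E L v C') \<and>
        w \<in> vnodes V L \<and> is_type1 l w \<and> vadj V E L v w \<and>
        (\<exists>C'. class_component V E L l cls i C' \<and> C' \<noteq> C \<and> has_nbr_in V E L w C') \<and>
        \<not> has_nbr_in V E L w C}"

(* matchings in a bipartite graph given by an edge set of pairs (left, right) *)
definition is_matching :: "('b \<times> 'b) set \<Rightarrow> ('b \<times> 'b) set \<Rightarrow> bool" where
  "is_matching H M \<longleftrightarrow> M \<subseteq> H \<and>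
     (\<forall>(a, b) \<in> M. \<forall>(c, d) \<in> M. (a, b) \<noteq> (c, d) \<longrightarrow> a \<noteq> c \<and> b \<noteq> d)"

definition is_maximal_matching :: "('b \<times> 'b) set \<Rightarrow> ('b \<times> 'b) set \<Rightarrow> bool" where
  "is_maximal_matching H M \<longleftrightarrow> is_matching H M \<and>
     (\<forall>e \<in> H. e \<notin> M \<longrightarrow> \<not> is_matching H (insert e M))"

end

theory Submission
  imports Defs
begin

lemma cc_sub:
  assumes "class_component V E L l cls i C" shows "C \<subseteq> old_class V L l cls i"
proof
  fix y assume "y \<in> C"
  from assms obtain x where x: "x \<in> old_class V L l cls i"
    and C: "C = {y. (\<lambda>a b. vadj V E L a b \<and> a \<in> old_class V L l cls i \<and> b \<in> old_class V L l cls i)\<^sup>*\<^sup>* x y}"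
    unfolding class_component_def by blast
  from \<open>y \<in> C\<close> C have "(\<lambda>a b. vadj V E L a b \<and> a \<in> old_class V L l cls i \<and> b \<in> old_class V L l cls i)\<^sup>*\<^sup>* x y" by simp
  then show "y \<in> old_class V L l cls i"
    by (induction rule: rtranclp_induct) (use x in auto)
qed

theorem lemma7:
  fixes V :: "'a set" and E :: "'a \<Rightarrow> 'a \<Rightarrow> bool"
    and L l t i m :: nat and cls :: "'a vnode \<Rightarrow> nat"
    and C :: "'a vnode set"
    and P :: "('a vnode \<times> 'a vnode \<times> 'a vnode \<times> 'a vnode) set"
    and M :: "('a vnode \<times> 'a vnode) set"
  assumes "finite V"
    and "\<And>x y. E x y \<Longrightarrow> x \<in> V \<and> y \<in> V"
    and "\<And>x y. E x y \<Longrightarrow> E y x"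
    and "\<And>x. \<not> E x x"
    and "L < l" and "l \<le> 2 * L"
    and "1 \<le> i" and "i \<le> t"
    and "\<And>x. x \<in> vnodes V L \<Longrightarrow> layer x < l \<Longrightarrow> cls x \<in> {1..t}"
    and "class_component V E L l cls i C"
    and "finite P" and "m \<le> card P"
    and "\<And>s v w u. (s, v, w, u) \<in> P \<Longrightarrow> long_connector V E L l cls i C s v w u"
    and "\<And>s v w u s' v' w' u'. (s, v, w, u) \<in> P \<Longrightarrow> (s', v', w', u') \<in> P \<Longrightarrow>
           (s, v, w, u) \<noteq> (s', v', w', u') \<Longrightarrow> {v, w} \<inter> {v', w'} = {}"
    and "is_maximal_matching (helper_edges V E L l cls i C) M"
  shows "m \<le> 2 * card M"
proof -
  let ?H = "helper_edges V E L l cls i C"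
  define fv where "fv = (\<lambda>p::'a vnode \<times> 'a vnode \<times> 'a vnode \<times> 'a vnode. fst (snd p))"
  define fw where "fw = (\<lambda>p::'a vnode \<times> 'a vnode \<times> 'a vnode \<times> 'a vnode. fst (snd (snd p)))"
  have sym: "vadj V E L y x" if "vadj V E L x y" for x y
    using that assms(3) unfolding vadj_def by auto
  have Cold: "C \<subseteq> old_class V L l cls i" using cc_sub[OF assms(10)] .
  have edge: "(fv p, fw p) \<in> ?H" if "p \<in> P" for p
  proof -
    obtain s v w u where p: "p = (s,v,w,u)" by (cases p) auto
    have lc: "long_connector V E L l cls i C s v w u" using assms(13) that p by simp
    have notin: "Psi v \<notin> Psi ` C"
    proof
      assume "Psi v \<in> Psi ` C"
      then obtain c where c: "c \<in> C" "Psi c = Psi v" by auto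
      have cv: "c \<in> vnodes V L" "layer c < l" using Cold c(1) unfolding old_class_def by auto
      have "layer w = l" using lc unfolding long_connector_def is_type1_def by auto
      hence "c \<noteq> w" using cv by auto
      have "vadj V E L w c"
        using lc cv \<open>c \<noteq> w\<close> c(2) assms(3) unfolding long_connector_def vadj_def by auto
      thus False using lc c(1) unfolding long_connector_def has_nbr_in_def by auto
    qed
    have L: "s \<in> C" "v \<in> vnodes V L" "is_type2 l v" "w \<in> vnodes V L" "is_type1 l w"
      "vadj V E L s v" "vadj V E L v w" "vadj V E L w u"
      "\<forall>C'. class_component V E L l cls i C' \<and> C' \<noteq> C \<longrightarrow> \<not> has_nbr_in V E L v C'"
      "\<not> has_nbr_in V E L w C"
      "\<exists>C'. class_component V E L l cls i C' \<and> C' \<noteq> C \<and> u \<in> C' \<and> Psi ` C \<inter> Psi ` C' = {}"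
      using lc unfolding long_connector_def by blast+
    have h1: "has_nbr_in V E L v C" unfolding has_nbr_in_def using L(1) sym[OF L(6)] by blast
    have h2: "\<exists>C'. class_component V E L l cls i C' \<and> C' \<noteq> C \<and> has_nbr_in V E L w C'"
      using L(11) L(8) unfolding has_nbr_in_def by blast
    have "fv p = v" "fw p = w" unfolding p fv_def fw_def by simp_all
    then show ?thesis unfolding helper_edges_def
      using L(2-5,7,9,10) notin h1 h2 by simp
  qed
  have dv: "p = q" if "p \<in> P" "q \<in> P" "fv p = fv q" for p q
  proof (rule ccontr)
    assume ne: "p \<noteq> q"
    obtain a b c d where p: "p = (a,b,c,d)" by (cases p) auto
    obtain a' b' c' d' where q: "q = (a',b',c',d')" by (cases q) auto
    have "{b,c} \<inter> {b',c'} = {}" using assms(14)[of a b c d a' b' c' d'] that(1,2) ne unfolding p q by blast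
    moreover have "fv p = b" "fv q = b'" "fw p = c" "fw q = c'" unfolding p q fv_def fw_def by simp_all
    ultimately show False using that(3) by blast
  qed
  have dw: "p = q" if "p \<in> P" "q \<in> P" "fw p = fw q" for p q
  proof (rule ccontr)
    assume ne: "p \<noteq> q"
    obtain a b c d where p: "p = (a,b,c,d)" by (cases p) auto
    obtain a' b' c' d' where q: "q = (a',b',c',d')" by (cases q) auto
    have "{b,c} \<inter> {b',c'} = {}" using assms(14)[of a b c d a' b' c' d'] that(1,2) ne unfolding p q by blast
    moreover have "fv p = b" "fv q = b'" "fw p = c" "fw q = c'" unfolding p q fv_def fw_def by simp_all
    ultimately show False using that(3) by blast
  qed
  have Mm: "is_matching ?H M" using assms(15) unfolding is_maximal_matching_def by auto
  have MH: "M \<subseteq> ?H" using Mm unfolding is_matching_def by auto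
  have finH: "finite ?H"
  proof -
    have fvn: "finite (vnodes V L)"
    proof -
      have "vnodes V L \<subseteq> (\<lambda>(j,a). Low j a) ` ({..2*L} \<times> V) \<union> (\<lambda>(j,a). Up1 j a) ` ({..2*L} \<times> V)
            \<union> (\<lambda>(j,a). Up2 j a) ` ({..2*L} \<times> V)"
        unfolding vnodes_def by force
      thus ?thesis using assms(1) by (meson finite_SigmaI finite_Un finite_atMost finite_imageI finite_subset)
    qed
    have "?H \<subseteq> vnodes V L \<times> vnodes V L" unfolding helper_edges_def by auto
    thus ?thesis using fvn by (meson finite_SigmaI finite_subset)
  qed
  have finM: "finite M" using MH finH finite_subset by blast
  have cover: "\<exists>e\<in>M. fst e = fv p \<or> snd e = fw p" if "p \<in> P" for p
  proof (cases "(fv p, fw p) \<in> M")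
    case True thus ?thesis by force
  next
    case False
    hence nm: "\<not> is_matching ?H (insert (fv p, fw p) M)"
      using assms(15) edge[OF that] unfolding is_maximal_matching_def by auto
    show ?thesis
    proof (rule ccontr)
      assume "\<not> ?thesis"
      hence "is_matching ?H (insert (fv p, fw p) M)"
        using Mm edge[OF that] unfolding is_matching_def by fastforce
      thus False using nm by simp
    qed
  qed
  define P1 where "P1 = {p\<in>P. \<exists>e\<in>M. fst e = fv p}"
  define P2 where "P2 = {p\<in>P. \<exists>e\<in>M. snd e = fw p}"
  have "P \<subseteq> P1 \<union> P2" using cover unfolding P1_def P2_def by blast
  hence "card P \<le> card (P1 \<union> P2)" using assms(11) unfolding P1_def P2_def by (intro card_mono) auto
  also have "\<dots> \<le> card P1 + card P2" by (rule card_Un_le)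
  finally have cP: "card P \<le> card P1 + card P2" .
  obtain g1 where g1: "\<forall>p\<in>P1. g1 p \<in> M \<and> fst (g1 p) = fv p"
    using bchoice[of P1 "\<lambda>p e. e \<in> M \<and> fst e = fv p"] unfolding P1_def by blast
  obtain g2 where g2: "\<forall>p\<in>P2. g2 p \<in> M \<and> snd (g2 p) = fw p"
    using bchoice[of P2 "\<lambda>p e. e \<in> M \<and> snd e = fw p"] unfolding P2_def by blast
  have "inj_on g1 P1"
  proof (rule inj_onI)
    fix p q assume pq: "p \<in> P1" "q \<in> P1" "g1 p = g1 q"
    hence "fv p = fv q" using g1 by metis
    thus "p = q" using dv pq(1,2) unfolding P1_def by blast
  qed
  hence c1: "card P1 \<le> card M" using g1 finM by (intro card_inj_on_le) auto
  have "inj_on g2 P2"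
  proof (rule inj_onI)
    fix p q assume pq: "p \<in> P2" "q \<in> P2" "g2 p = g2 q"
    hence "fw p = fw q" using g2 by metis
    thus "p = q" using dw pq(1,2) unfolding P2_def by blast
  qed
  hence c2: "card P2 \<le> card M" using g2 finM by (intro card_inj_on_le) auto
  show ?thesis using assms(12) c1 c2 cP by linarith
qed

end
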